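(* For an integer $q\ge 3$, let $\mathbf{mGT}_q$ be the subgroup of the group of permutations of the set $\mathbb{Z}/q\mathbb{Z}$ generated by (i) the multiplication maps $a\mapsto da$ for all $d\in(\mathbb{Z}/q\mathbb{Z})^*$, and (ii) the involution $\theta_q: a\mapsto 1-a$. For integers $p,q\ge 3$ with $p$ dividing $q$, let $t_{q,p}:\mathbb{Z}/q\mathbb{Z}\to\mathbb{Z}/p\mathbb{Z}$, $a \bmod q\mapsto a\bmod p$, be the reduction homomorphism. Then for every such $p\mid q$ and every $g\in\mathbf{mGT}_q$ there is a unique permutation $u_{q,p}(g)$ of $\mathbb{Z}/p\mathbb{Z}$ with $t_{q,p}\circ g=u_{q,p}(g)\circ t_{q,p}$; it lies in $\mathbf{mGT}_p$, and $g\mapsto u_{q,p}(g)$ is a group homomorphism $u_{q,p}:\mathbf{mGT}_q\to\mathbf{mGT}_p$. Moreover, whenever $p$ divides $q$ and $r$, and $q$ and $r$ divide $s$ (all $\ge 3$), one has $u_{q,p}\circ u_{s,q}=u_{r,p}\circ u_{s,r}=u_{s,p}$.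
   Context: $(\mathbb{Z}/q\mathbb{Z})^*$ denotes the multiplicative group of residue classes $d\bmod q$ with $\gcd(d,q)=1$. *)

theory Defs
  imports "HOL-Algebra.Algebra" "HOL-Combinatorics.Permutations"
begin

text \<open>Z/qZ is modelled by the representatives {..<q} (natural numbers).
 A permutation of Z/qZ is a function nat => nat permuting {..<q} (identity outside).\<close>

definition perm_grp :: "nat \<Rightarrow> (nat \<Rightarrow> nat) monoid" where
  "perm_grp q = \<lparr> carrier = {f. f permutes {..<q}}, monoid.mult = (\<circ>), one = id \<rparr>"

definition mult_map :: "nat \<Rightarrow> nat \<Rightarrow> nat \<Rightarrow> nat" where
  "mult_map q d = (\<lambda>a. if a < q then (d * a) mod q else a)"

definition theta :: "nat \<Rightarrow> nat \<Rightarrow> nat" where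
  "theta q = (\<lambda>a. if a < q then (q + 1 - a) mod q else a)"

definition mGT_gens :: "nat \<Rightarrow> (nat \<Rightarrow> nat) set" where
  "mGT_gens q = {mult_map q d | d. d < q \<and> coprime d q} \<union> {theta q}"

definition mGT :: "nat \<Rightarrow> (nat \<Rightarrow> nat) set" where
  "mGT q = generate (perm_grp q) (mGT_gens q)"

definition mGT_grp :: "nat \<Rightarrow> (nat \<Rightarrow> nat) monoid" where
  "mGT_grp q = (perm_grp q) \<lparr> carrier := mGT q \<rparr>"

definition red :: "nat \<Rightarrow> nat \<Rightarrow> nat" where
  "red p a = a mod p"

definition induced :: "nat \<Rightarrow> nat \<Rightarrow> (nat \<Rightarrow> nat) \<Rightarrow> (nat \<Rightarrow> nat)" where
  "induced q p g = (THE u. u permutes {..<p} \<and> (\<forall>a<q. red p (g a) = u (red p a)))"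

end

theory Submission imports Defs "HOL-Number_Theory.Number_Theory" begin

lemma theta_red: assumes "p dvd q" "0<p" "a < (q::nat)" shows "((q + 1 - a) mod q) mod p = (p + 1 - a mod p) mod p"
proof -
  obtain k where k: "q = p * k" using assms(1) by blast
  have A: "int ((q + 1 - a) mod p) = (int q + 1 - int a) mod int p"
    using assms by (simp add: of_nat_mod of_nat_diff add.commute)
  also have "int q + 1 - int a = (1 - int a) + int k * int p" using k by simp
  also have "((1 - int a) + int k * int p) mod int p = (1 - int a) mod int p"
    by (rule mod_mult_self1)
  also have "(1 - int a) mod int p = (1 - int a mod int p) mod int p"
    by (simp add: mod_diff_right_eq)
  also have "\<dots> = ((1 - int a mod int p) + 1 * int p) mod int p"
    by (rule mod_mult_self1[symmetric])
  also have "\<dots> = int ((p + 1 - a mod p) mod p)"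
  proof -
    have "a mod p < p" using assms(2) by simp
    then have "int (p + 1 - a mod p) = (1 - int a mod int p) + 1 * int p"
      by (simp add: of_nat_diff of_nat_mod)
    then show ?thesis by (simp only: of_nat_mod)
  qed
  finally have "(q + 1 - a) mod p = (p + 1 - a mod p) mod p" by (simp only: of_nat_eq_iff)
  then show ?thesis using assms(1) by (simp add: mod_mod_cancel)
qed

lemma perm_grp_group: "group (perm_grp q)"
  using permutes_inv permutes_inv_o(2)
  by (auto intro!: groupI
         simp add: perm_grp_def permutes_compose
                   permutes_id comp_assoc, blast)

lemma perm_grp_inv [simp]:
  assumes "f permutes {..<q}" shows "inv\<^bsub>perm_grp q\<^esub> f = Hilbert_Choice.inv f"
proof -
  have "Hilbert_Choice.inv f \<circ> f = id"
    using assms permutes_inv_o(2) by auto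
  hence "(Hilbert_Choice.inv f) \<otimes>\<^bsub>perm_grp q\<^esub> f = one (perm_grp q)"
    by (simp add: perm_grp_def)
  thus ?thesis  using group.inv_equality[OF perm_grp_group] assms permutes_inv
    by (fastforce simp add: perm_grp_def)
qed

lemma mult_map_permutes:
  assumes "coprime d q" "0 < q" shows "mult_map q d permutes {..<q}"
proof -
  have inj: "inj_on (mult_map q d) {..<q}"
  proof (rule inj_onI)
    fix a b assume "a \<in> {..<q}" "b \<in> {..<q}" "mult_map q d a = mult_map q d b"
    then have "[d * a = d * b] (mod q)" "a < q" "b < q" by (auto simp: mult_map_def cong_def)
    then show "a = b" using assms cong_mult_lcancel_nat by (metis cong_def mod_less)
  qed
  have sub: "mult_map q d ` {..<q} \<subseteq> {..<q}" using assms by (auto simp: mult_map_def)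
  have "bij_betw (mult_map q d) {..<q} {..<q}"
    using inj sub endo_inj_surj[of "{..<q}"] by (simp add: bij_betw_def)
  then show ?thesis by (rule bij_imp_permutes) (auto simp: mult_map_def)
qed

lemma Suc_mod_self: assumes "2 \<le> (q::nat)" shows "Suc q mod q = 1"
proof -
  have "Suc q mod q = (1 + q) mod q" by simp
  also have "\<dots> = 1 mod q" by (rule mod_add_self2)
  also have "\<dots> = 1" using assms by simp
  finally show ?thesis .
qed

lemma theta_val: assumes "2 \<le> q" "a < q"
  shows "theta q a = (if a = 0 then 1 else if a = 1 then 0 else q + 1 - a)"
proof -
  consider "a = 0" | "a = 1" | "2 \<le> a" by linarith
  then show ?thesis
  proof cases
    case 1 then show ?thesis using assms Suc_mod_self[OF assms(1)] by (simp add: theta_def)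
  next
    case 2 then show ?thesis using assms by (simp add: theta_def)
  next
    case 3
    then have "q + 1 - a < q" using assms by linarith
    then show ?thesis using assms 3 by (simp add: theta_def)
  qed
qed

lemma theta_invol: assumes "2 \<le> q" shows "theta q (theta q a) = a"
proof (cases "a < q")
  case True
  consider "a = 0" | "a = 1" | "2 \<le> a" by linarith
  then show ?thesis
  proof cases
    case 1 then show ?thesis using assms True theta_val[OF assms] by simp
  next
    case 2 then show ?thesis using assms True theta_val[OF assms] by simp
  next
    case 3
    have t: "theta q a = q + 1 - a" using theta_val[OF assms True] 3 by simp
    have "q + 1 - a < q" "q + 1 - a \<ge> 2" using 3 True by linarith+
    then show ?thesis using t theta_val[OF assms, of "q + 1 - a"] 3 True by simp
  qed
qed (simp add: theta_def)

lemma theta_lt: "0 < q \<Longrightarrow> a < q \<Longrightarrow> theta q a < q" by (simp add: theta_def)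

lemma theta_permutes:
  assumes "2 \<le> q" shows "theta q permutes {..<q}"
proof -
  have "bij_betw (theta q) {..<q} {..<q}"
    by (rule bij_betw_byWitness[where f'="theta q"]) (use assms theta_invol theta_lt in auto)
  then show ?thesis by (rule bij_imp_permutes) (auto simp: theta_def)
qed

lemma gens_case:
  assumes "p dvd q" "3 \<le> p" "3 \<le> q" "h \<in> mGT_gens q"
  shows "h permutes {..<q} \<and> (\<exists>u \<in> mGT_gens p. u permutes {..<p} \<and> (\<forall>a<q. red p (h a) = u (red p a)))"
proof -
  have "(\<exists>d. h = mult_map q d \<and> d < q \<and> coprime d q) \<or> h = theta q"
    using assms(4) unfolding mGT_gens_def by auto
  then show ?thesis
  proof (elim disjE exE conjE)
  fix d assume h: "h = mult_map q d" and d: "d < q" "coprime d q"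
  have c: "coprime (d mod p) p"
    using d assms(1) by (metis coprime_divisors dvd_mod_iff gcd_nat.order_iff_strict coprime_mod_left_iff dvd_imp_mod_0)
  have p0: "0 < p" using assms by auto
  have "mult_map p (d mod p) \<in> mGT_gens p" unfolding mGT_gens_def using c p0 by auto
  moreover have "mult_map p (d mod p) permutes {..<p}" using mult_map_permutes[OF c p0] .
  moreover have "\<forall>a<q. red p (h a) = mult_map p (d mod p) (red p a)"
    using assms(1) p0 by (auto simp: h mult_map_def red_def mod_mod_cancel mod_mult_eq)
  ultimately show ?thesis using h mult_map_permutes[OF d(2)] assms by auto
next
  assume h: "h = theta q"
  have "theta p \<in> mGT_gens p" unfolding mGT_gens_def by auto
  moreover have "theta p permutes {..<p}" using theta_permutes assms by auto
  moreover have "\<forall>a<q. red p (h a) = theta p (red p a)"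
    using assms theta_red[OF assms(1)] by (auto simp: h theta_def red_def)
  ultimately have "\<exists>u \<in> mGT_gens p. u permutes {..<p} \<and> (\<forall>a<q. red p (h a) = u (red p a))" by blast
  then show ?thesis using h theta_permutes[of q] assms by auto
qed
qed

lemma id_in_gen: "id \<in> generate (perm_grp p) S"
  using generate.one[of "perm_grp p" S] by (simp add: perm_grp_def)

lemma main:
  assumes "p dvd q" "3 \<le> p" "3 \<le> q" "g \<in> mGT q"
  shows "g permutes {..<q} \<and> (\<exists>u \<in> mGT p. u permutes {..<p} \<and> (\<forall>a<q. red p (g a) = u (red p a)))"
  using assms(4) unfolding mGT_def
proof (induction rule: generate.induct)
  case one
  then show ?case using id_in_gen[of p "mGT_gens p"]
    permutes_id[of "{..<q}", unfolded id_def] permutes_id[of "{..<p}", unfolded id_def]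
    by (auto simp: perm_grp_def mGT_def intro!: bexI[of _ id])
next
  case (incl h)
  then show ?case using gens_case[OF assms(1-3) incl] generate.incl[of _ "mGT_gens p" "perm_grp p"]
    by (auto simp: mGT_def)
next
  case (inv h)
  from gens_case[OF assms(1-3) inv] obtain u where
    h: "h permutes {..<q}" and u: "u \<in> mGT_gens p" "u permutes {..<p}" "\<forall>a<q. red p (h a) = u (red p a)"
    by blast
  have i1: "inv\<^bsub>perm_grp q\<^esub> h = Hilbert_Choice.inv h" using h by simp
  have i2: "Hilbert_Choice.inv u \<in> mGT p"
    using generate.inv[OF u(1), of "perm_grp p"] u(2) by (simp add: mGT_def)
  have "\<forall>a<q. red p (Hilbert_Choice.inv h a) = Hilbert_Choice.inv u (red p a)"
  proof (intro allI impI)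
    fix a assume a: "a < q"
    define b where "b = Hilbert_Choice.inv h a"
    have hb: "h b = a" using h b_def permutes_inverses(1) by metis
    have "b < q" using h a b_def permutes_inv permutes_in_image by (metis lessThan_iff)
    then have "red p a = u (red p b)" using u(3) hb by auto
    then show "red p (Hilbert_Choice.inv h a) = Hilbert_Choice.inv u (red p a)"
      using u(2) permutes_inverses(2) b_def by metis
  qed
  then show ?case using i1 i2 h u permutes_inv[OF h] permutes_inv[OF u(2)] unfolding mGT_def by auto
next
  case (eng h1 h2)
  from eng.IH[unfolded mGT_def[symmetric]] obtain u1 u2 where
    h: "h1 permutes {..<q}" "h2 permutes {..<q}" and
    u: "u1 \<in> mGT p" "u1 permutes {..<p}" "\<forall>a<q. red p (h1 a) = u1 (red p a)"
       "u2 \<in> mGT p" "u2 permutes {..<p}" "\<forall>a<q. red p (h2 a) = u2 (red p a)"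
    by blast
  have m: "h1 \<otimes>\<^bsub>perm_grp q\<^esub> h2 = h1 \<circ> h2" by (simp add: perm_grp_def)
  have "u1 \<circ> u2 \<in> mGT p"
    using generate.eng[of u1 "perm_grp p" "mGT_gens p" u2] u by (simp add: mGT_def perm_grp_def)
  moreover have "\<forall>a<q. red p ((h1 \<circ> h2) a) = (u1 \<circ> u2) (red p a)"
  proof (intro allI impI)
    fix a assume a: "a < q"
    then have "h2 a < q" using h(2) permutes_in_image[OF h(2)] by simp
    then show "red p ((h1 \<circ> h2) a) = (u1 \<circ> u2) (red p a)" using u a by simp
  qed
  ultimately show ?case using m h u permutes_compose unfolding mGT_def by (metis (no_types, lifting))
qed

lemma uniq:
  assumes "p dvd q" "0 < (q::nat)" "u permutes {..<p}" "v permutes {..<p}"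
    "\<forall>a<q. red p (g a) = u (red p a)" "\<forall>a<q. red p (g a) = v (red p a)"
  shows "u = v"
proof
  fix x
  show "u x = v x"
  proof (cases "x < p")
    case True
    have "p \<le> q" using assms(1,2) by (simp add: dvd_imp_le)
    then have "x < q" using True by simp
    then show ?thesis using assms(5,6) True by (metis red_def mod_less)
  next
    case False
    then show ?thesis using assms(3,4) by (simp add: permutes_def)
  qed
qed

lemma induced_eq:
  assumes "p dvd q" "0 < (q::nat)" "u permutes {..<p}" "\<forall>a<q. red p (g a) = u (red p a)"
  shows "induced q p g = u"
  unfolding induced_def
  by (rule the_equality) (use assms uniq[OF assms(1,2)] in auto)

lemma induced_spec:
  assumes "p dvd q" "3 \<le> p" "3 \<le> q" "g \<in> mGT q"
  shows "g permutes {..<q} \<and> induced q p g \<in> mGT p \<and> induced q p g permutes {..<p}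
     \<and> (\<forall>a<q. red p (g a) = induced q p g (red p a))"
proof -
  obtain u where u: "u \<in> mGT p" "u permutes {..<p}" "\<forall>a<q. red p (g a) = u (red p a)"
    and g: "g permutes {..<q}" using main[OF assms] by blast
  have "induced q p g = u" using induced_eq[OF assms(1) _ u(2,3)] assms by simp
  then show ?thesis using u g by simp
qed

theorem proposition6p3:
  shows "(\<forall>p q g. 3 \<le> p \<and> 3 \<le> q \<and> p dvd q \<and> g \<in> mGT q \<longrightarrow>
            (\<exists>!u. u permutes {..<p} \<and> (\<forall>a<q. red p (g a) = u (red p a)))
            \<and> induced q p g \<in> mGT p)
       \<and> (\<forall>p q. 3 \<le> p \<and> 3 \<le> q \<and> p dvd q \<longrightarrow>
            induced q p \<in> hom (mGT_grp q) (mGT_grp p))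
       \<and> (\<forall>p q r s. 3 \<le> p \<and> 3 \<le> q \<and> 3 \<le> r \<and> 3 \<le> s \<and> p dvd q \<and> p dvd r
               \<and> q dvd s \<and> r dvd s \<longrightarrow>
            (\<forall>g \<in> mGT s. induced q p (induced s q g) = induced s p g
                        \<and> induced r p (induced s r g) = induced s p g))"
proof (intro conjI allI impI ballI)
  fix p q g assume a: "3 \<le> p \<and> 3 \<le> q \<and> p dvd q \<and> g \<in> mGT q"
  then have s: "g permutes {..<q} \<and> induced q p g \<in> mGT p \<and> induced q p g permutes {..<p}
     \<and> (\<forall>a<q. red p (g a) = induced q p g (red p a))" using induced_spec by blast
  have q0: "0 < q" using a by simp
  show "\<exists>!u. u permutes {..<p} \<and> (\<forall>a<q. red p (g a) = u (red p a))"
    using s uniq[OF _ q0, of p _ _ g] a by blast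
  show "induced q p g \<in> mGT p" using s by blast
next
  fix p q :: nat assume a: "3 \<le> p \<and> 3 \<le> q \<and> p dvd q"
  have q0: "0 < q" using a by simp
  show "induced q p \<in> hom (mGT_grp q) (mGT_grp p)"
  proof (rule homI)
    fix x assume "x \<in> carrier (mGT_grp q)"
    then show "induced q p x \<in> carrier (mGT_grp p)"
      using induced_spec[of p q x] a by (simp add: mGT_grp_def)
  next
    fix x y assume "x \<in> carrier (mGT_grp q)" "y \<in> carrier (mGT_grp q)"
    then have x: "x \<in> mGT q" and y: "y \<in> mGT q" by (auto simp: mGT_grp_def)
    note sx = induced_spec[OF _ _ _ x, of p] and sy = induced_spec[OF _ _ _ y, of p]
    have "induced q p (x \<circ> y) = induced q p x \<circ> induced q p y"
    proof (rule induced_eq[OF _ q0])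
      show "p dvd q" using a by simp
      show "induced q p x \<circ> induced q p y permutes {..<p}"
        using sx sy a permutes_compose by blast
      show "\<forall>a<q. red p ((x \<circ> y) a) = (induced q p x \<circ> induced q p y) (red p a)"
      proof (intro allI impI)
        fix b assume b: "b < q"
        have "y b < q" using sy a permutes_in_image[of y "{..<q}" b] b by auto
        then show "red p ((x \<circ> y) b) = (induced q p x \<circ> induced q p y) (red p b)"
          using sx sy a b by auto
      qed
    qed
    then show "induced q p (x \<otimes>\<^bsub>mGT_grp q\<^esub> y) = induced q p x \<otimes>\<^bsub>mGT_grp p\<^esub> induced q p y"
      by (simp add: mGT_grp_def perm_grp_def)
  qed
next
  have comp: "induced q p (induced s q g) = induced s p g"
    if a: "3 \<le> p" "3 \<le> q" "3 \<le> s" "p dvd q" "q dvd s" and g: "g \<in> mGT s" for p q s g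
  proof -
    have ss: "induced s q g \<in> mGT q" "\<forall>a<s. red q (g a) = induced s q g (red q a)"
      using induced_spec[OF a(5) a(2) a(3) g] by auto
    have sq: "induced q p (induced s q g) permutes {..<p}"
      "\<forall>b<q. red p (induced s q g b) = induced q p (induced s q g) (red p b)"
      using induced_spec[OF a(4) a(1) a(2) ss(1)] by auto
    have "p dvd s" using a dvd_trans by blast
    show ?thesis
    proof (rule sym, rule induced_eq[OF \<open>p dvd s\<close>])
      show "0 < s" using a by simp
      show "induced q p (induced s q g) permutes {..<p}" using sq(1) .
      show "\<forall>b<s. red p (g b) = induced q p (induced s q g) (red p b)"
      proof (intro allI impI)
        fix b assume b: "b < s"
        have q0: "0 < q" using a by simp
        have "red p (g b) = red p (red q (g b))" using a(4) by (simp add: red_def mod_mod_cancel)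
        also have "\<dots> = red p (induced s q g (red q b))" using ss(2) b by simp
        also have "\<dots> = induced q p (induced s q g) (red p (red q b))"
          using sq(2) q0 by (simp add: red_def)
        also have "\<dots> = induced q p (induced s q g) (red p b)" using a(4) by (simp add: red_def mod_mod_cancel)
        finally show "red p (g b) = induced q p (induced s q g) (red p b)" .
      qed
    qed
  qed
  fix p q r s g assume a: "3 \<le> p \<and> 3 \<le> q \<and> 3 \<le> r \<and> 3 \<le> s \<and> p dvd q \<and> p dvd r \<and> q dvd s \<and> r dvd s"
    and g: "g \<in> mGT s"
  show "induced q p (induced s q g) = induced s p g" using comp[of p q s g] a g by simp
  show "induced r p (induced s r g) = induced s p g" using comp[of p r s g] a g by simp
qed

end
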